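(* Let $m\ge 2$, let $K\ne\Delta_{[m]}$ be a simplicial complex on $[m]$ and let $i\in[m]$ with $i\in V(K)$ and $i'\in V(K^\vee)$. Then $\mathrm{Bier}(K)$ is a weak suspension with vertex pair $\{i,i'\}$ if and only if $K$ is a weak cone with apex $i$ and $K^\vee$ is a weak cone with apex $i'$.
   Context: A simplicial complex $K$ on $[m]=\{1,\dots,m\}$ is a nonempty family of subsets of $[m]$ closed under taking subsets; $V(K)=\{i:\{i\}\in K\}$. $\Delta_{[m]}=2^{[m]}$. Let $[m']=\{1',\dots,m'\}$ be a disjoint copy of $[m]$, $I'=\{i':i\in I\}$. For $K\ne\Delta_{[m]}$ the Alexander dual $K^\vee$ is the complex on $[m']$ with $J'\in K^\vee$ iff $[m]\setminus J\notin K$. The Bier sphere $\mathrm{Bier}(K)$ is the complex on $[m]\sqcup[m']$ with faces $I\sqcup J'$, $I\in K$, $J'\in K^\vee$, $I\cap J=\varnothing$. A complex $L$ is a weak cone with apex $a\in V(L)$ if $\{a,v\}\in L$ for all $v\in V(L)\setminus\{a\}$. $L$ is a weak suspension with vertex pair $\{a,b\}$ if $a,b\in V(L)$ are distinct, $\{a,b\}\notin L$, and each of $a,b$ forms an edge of $L$ with every vertex of $V(L)\setminus\{a,b\}$. *)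

theory Defs
  imports Main
begin

text \<open>Vertices of [m] are naturals 1..m; the disjoint union [m] with [m'] is
  modelled by the sum type nat + nat, with i as Inl i and i' as Inr i.\<close>

definition simplicial_complex :: "nat \<Rightarrow> nat set set \<Rightarrow> bool" where
  "simplicial_complex m K \<longleftrightarrow> K \<noteq> {} \<and> (\<forall>F\<in>K. F \<subseteq> {1..m}) \<and>
     (\<forall>F\<in>K. \<forall>G. G \<subseteq> F \<longrightarrow> G \<in> K)"

definition full_simplex :: "nat \<Rightarrow> nat set set" where
  "full_simplex m = Pow {1..m}"

definition vertices :: "'a set set \<Rightarrow> 'a set" where
  "vertices L = {v. {v} \<in> L}"

definition alexander_dual :: "nat \<Rightarrow> nat set set \<Rightarrow> (nat + nat) set set" where
  "alexander_dual m K = {Inr ` J | J. J \<subseteq> {1..m} \<and> {1..m} - J \<notin> K}"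

definition bier :: "nat \<Rightarrow> nat set set \<Rightarrow> (nat + nat) set set" where
  "bier m K = {Inl ` I \<union> Inr ` J | I J. I \<in> K \<and> Inr ` J \<in> alexander_dual m K \<and> I \<inter> J = {}}"

definition weak_cone :: "'a set set \<Rightarrow> 'a \<Rightarrow> bool" where
  "weak_cone L a \<longleftrightarrow> a \<in> vertices L \<and> (\<forall>v \<in> vertices L - {a}. {a, v} \<in> L)"

definition weak_suspension :: "'a set set \<Rightarrow> 'a \<Rightarrow> 'a \<Rightarrow> bool" where
  "weak_suspension L a b \<longleftrightarrow> a \<in> vertices L \<and> b \<in> vertices L \<and> a \<noteq> b \<and> {a, b} \<notin> L \<and>
     (\<forall>v \<in> vertices L - {a, b}. {a, v} \<in> L \<and> {b, v} \<in> L)"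

end

theory Submission
  imports Defs
begin

lemma bier_mem:
  "S \<in> bier m K \<longleftrightarrow> S = Inl ` (Inl -` S) \<union> Inr ` (Inr -` S) \<and> Inl -` S \<in> K
     \<and> Inr ` (Inr -` S) \<in> alexander_dual m K \<and> Inl -` S \<inter> Inr -` S = {}"
proof
  assume "S \<in> bier m K"
  then obtain I J where "S = Inl ` I \<union> Inr ` J" "I \<in> K" "Inr ` J \<in> alexander_dual m K" "I \<inter> J = {}"
    unfolding bier_def by blast
  moreover have "Inl -` (Inl ` I \<union> Inr ` J) = I" "Inr -` (Inl ` I \<union> Inr ` J) = J" by auto
  ultimately show "S = Inl ` (Inl -` S) \<union> Inr ` (Inr -` S) \<and> Inl -` S \<in> K
     \<and> Inr ` (Inr -` S) \<in> alexander_dual m K \<and> Inl -` S \<inter> Inr -` S = {}" by simp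
next
  assume "S = Inl ` (Inl -` S) \<union> Inr ` (Inr -` S) \<and> Inl -` S \<in> K
     \<and> Inr ` (Inr -` S) \<in> alexander_dual m K \<and> Inl -` S \<inter> Inr -` S = {}"
  then show "S \<in> bier m K" unfolding bier_def by blast
qed

lemma dual_mem: "Inr ` J \<in> alexander_dual m K \<longleftrightarrow> J \<subseteq> {1..m} \<and> {1..m} - J \<notin> K"
  unfolding alexander_dual_def by (auto dest: inj_image_eq_iff[THEN iffD1, rotated, OF _ inj_Inr])

lemma dual_sub: "X \<in> alexander_dual m K \<Longrightarrow> X = Inr ` (Inr -` X)"
  unfolding alexander_dual_def by auto

theorem mainTheorem4:
  fixes m i :: nat and K :: "nat set set"
  assumes "m \<ge> 2"
    and "simplicial_complex m K"
    and "K \<noteq> full_simplex m"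
    and "i \<in> {1..m}"
    and "i \<in> vertices K"
    and "Inr i \<in> vertices (alexander_dual m K)"
  shows "weak_suspension (bier m K) (Inl i) (Inr i) \<longleftrightarrow>
           weak_cone K i \<and> weak_cone (alexander_dual m K) (Inr i)"
proof -
  have emp: "{} \<in> K" using assms(2) unfolding simplicial_complex_def by blast
  have notall: "{1..m} \<notin> K"
  proof
    assume "{1..m} \<in> K"
    hence "K = Pow {1..m}" using assms(2) unfolding simplicial_complex_def by blast
    thus False using assms(3) unfolding full_simplex_def by simp
  qed
  have edual: "{} \<in> alexander_dual m K" using dual_mem[of "{}" m K] notall by simp
  have b1: "{Inl a} \<in> bier m K \<longleftrightarrow> {a} \<in> K" for a
    using emp edual by (subst bier_mem) (auto simp: vimage_def)
  have b2: "{Inr a} \<in> bier m K \<longleftrightarrow> {Inr a} \<in> alexander_dual m K" for a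
    using emp by (subst bier_mem) (auto simp: vimage_def)
  have p1: "Inl -` {Inl a, Inl b} = {a, b}" "Inr -` {Inl a, Inl b} = ({}::nat set)"
    "Inl -` {Inr a, Inr b} = ({}::nat set)" "Inr -` {Inr a, Inr b} = {a, b}"
    "Inl -` {Inl a, Inr b} = {a}" "Inr -` {Inl a, Inr b} = {b}" for a b :: nat by auto
  have b3: "{Inl a, Inl b} \<in> bier m K \<longleftrightarrow> {a, b} \<in> K" for a b
  proof -
    have "{Inl a, Inl b} = Inl ` {a, b} \<union> Inr ` {}" by simp
    thus ?thesis using edual by (subst bier_mem) (simp only: p1, simp)
  qed
  have b4: "{Inr a, Inr b} \<in> bier m K \<longleftrightarrow> {Inr a, Inr b} \<in> alexander_dual m K" for a b
  proof -
    have "{Inr a, Inr b} = Inl ` {} \<union> Inr ` {a, b}" by simp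
    thus ?thesis using emp by (subst bier_mem) (simp only: p1, simp)
  qed
  have b5: "{Inl a, Inr b} \<in> bier m K \<longleftrightarrow> {a} \<in> K \<and> {Inr b} \<in> alexander_dual m K \<and> a \<noteq> b" for a b
  proof -
    show ?thesis by (subst bier_mem) (simp only: p1, simp add: insert_commute, blast)
  qed
  have vb: "vertices (bier m K) = Inl ` vertices K \<union> Inr ` (Inr -` vertices (alexander_dual m K))"
  proof (rule set_eqI)
    fix x show "x \<in> vertices (bier m K) \<longleftrightarrow> x \<in> Inl ` vertices K \<union> Inr ` (Inr -` vertices (alexander_dual m K))"
      by (cases x) (auto simp: vertices_def b1 b2)
  qed
  have vd: "vertices (alexander_dual m K) = Inr ` (Inr -` vertices (alexander_dual m K))"
  proof (rule set_eqI, rule iffI)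
    fix v assume "v \<in> vertices (alexander_dual m K)"
    hence "{v} \<in> alexander_dual m K" unfolding vertices_def by simp
    then obtain J where "{v} = Inr ` J" unfolding alexander_dual_def by blast
    then obtain a where "v = Inr a" by (metis imageE insertI1)
    thus "v \<in> Inr ` (Inr -` vertices (alexander_dual m K))"
      using \<open>v \<in> vertices (alexander_dual m K)\<close> by blast
  qed blast
  have ne: "{Inl i, Inr i} \<notin> bier m K" using b5 by simp
  have vi: "Inl i \<in> vertices (bier m K)" "Inr i \<in> vertices (bier m K)"
    using assms(5,6) vb by auto
  show ?thesis
  proof
    assume ws: "weak_suspension (bier m K) (Inl i) (Inr i)"
    have "weak_cone K i" unfolding weak_cone_def
    proof (intro conjI ballI)
      fix v assume "v \<in> vertices K - {i}"
      hence "Inl v \<in> vertices (bier m K) - {Inl i, Inr i}" using vb by auto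
      thus "{i, v} \<in> K" using ws b3 unfolding weak_suspension_def by blast
    qed (fact assms(5))
    moreover have "weak_cone (alexander_dual m K) (Inr i)" unfolding weak_cone_def
    proof (intro conjI ballI)
      fix v assume v: "v \<in> vertices (alexander_dual m K) - {Inr i}"
      then obtain a where a: "v = Inr a" using vd by blast
      hence "Inr a \<in> vertices (bier m K) - {Inl i, Inr i}" using vb v by auto
      thus "{Inr i, v} \<in> alexander_dual m K" using ws b4 a unfolding weak_suspension_def by blast
    qed (fact assms(6))
    ultimately show "weak_cone K i \<and> weak_cone (alexander_dual m K) (Inr i)" ..
  next
    assume wc: "weak_cone K i \<and> weak_cone (alexander_dual m K) (Inr i)"
    have key: "\<forall>v \<in> vertices (bier m K) - {Inl i, Inr i}. {Inl i, v} \<in> bier m K \<and> {Inr i, v} \<in> bier m K"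
    proof
      fix v assume v: "v \<in> vertices (bier m K) - {Inl i, Inr i}"
      show "{Inl i, v} \<in> bier m K \<and> {Inr i, v} \<in> bier m K"
      proof (cases v)
        case (Inl a)
        hence "a \<in> vertices K - {i}" using v vb by auto
        hence "{i, a} \<in> K" "{a} \<in> K" "a \<noteq> i" using wc unfolding weak_cone_def vertices_def by auto
        moreover have "{Inr i, Inl a} = {Inl a, Inr i}" by blast
        moreover have "{Inr i} \<in> alexander_dual m K" using assms(6) unfolding vertices_def by simp
        ultimately show ?thesis using Inl b3 b5 by simp
      next
        case (Inr a)
        hence "Inr a \<in> vertices (alexander_dual m K) - {Inr i}" using v vb by auto
        hence "{Inr i, Inr a} \<in> alexander_dual m K" "{Inr a} \<in> alexander_dual m K" "a \<noteq> i"
          using wc unfolding weak_cone_def vertices_def by auto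
        moreover have "{i} \<in> K" using assms(5) unfolding vertices_def by simp
        ultimately show ?thesis using Inr b4 b5 by simp
      qed
    qed
    show "weak_suspension (bier m K) (Inl i) (Inr i)" unfolding weak_suspension_def
      using key vi ne by simp
  qed
qed

end
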